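(* Let $V_1$ and $V_2$ be near vector spaces over the same commutative $F$ (no finiteness assumption on the number of blocks). If $BT(V_1)=BT(V_2)$, then $\bar F\cap\mathrm{Aut}(V_1)=\bar F\cap\mathrm{Aut}(V_2)$, i.e. a formal sum $\alpha_1+_\cdot\cdots+_\cdot\alpha_n\in\bar F$ acts as an automorphism on $V_1$ if and only if it acts as an automorphism on $V_2$.
   Context: An F-group is a pair $(V,F)$ where $(V,+)$ is a group and $F$ is a set of endomorphisms of $V$ such that: the maps $0,1,-1$ lie in $F$; $F\setminus\{0\}$ is a subgroup of $\mathrm{Aut}(V,+)$ under composition; and if $\alpha x=\beta x$ with $\alpha,\beta\in F$, $x\in V$ then $\alpha=\beta$ or $x=0$. The quasi-kernel $Q(V)$ is the set of $u\in V$ such that for all $\alpha,\beta\in F$ there is $\gamma\in F$ with $\alpha u+\beta u=\gamma u$. $(V,F)$ is a near vector space if $Q(V)$ generates $(V,+)$; "over a commutative $F$" means $\alpha(\beta v)=\beta(\alpha v)$ for all $\alpha,\beta\in F$, $v\in V$. For $u\in Q(V)\setminus\{0\}$, $\alpha+_u\beta$ is the unique $\gamma$ with $\alpha u+\beta u=\gamma u$. Elements $u,v\in Q(V)$ are compatible if $u+\lambda v\in Q(V)$ for some $\lambda\in F\setminus\{0\}$. By André's decomposition theorem $V$ is the direct sum of maximal regular (all nonzero quasi-kernel elements pairwise compatible) near vector subspaces $B_i$, $i\in I$, each nonzero element of $Q(V)$ lying in exactly one $B_i$; these are the blocks. For commutative $F$, all nonzero $u\in Q(V)\cap B_i$ give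 the same operation $+_{u_i}$ and $B_i$ is a vector space over the field $(F,+_{u_i},\circ)$. The block type is $BT(V)=\{+_{u_i}: i\in I\}$, a set of binary operations on $F$ (equality of block types means equality of these sets of operations, not isomorphism). $\bar F$ is the set of formal finite sums $\alpha_1+_\cdot\cdots+_\cdot\alpha_n$ of elements of $F$, acting on $V$ by $(\alpha_1+_\cdot\cdots+_\cdot\alpha_n)(v)=\alpha_1(v)+\cdots+\alpha_n(v)$; $\bar F\cap\mathrm{Aut}(V)$ is the set of those formal sums acting on $V$ as automorphisms of $(V,+)$. *)

theory Defs
  imports Main
begin

(* The scalar set F is modelled abstractly: a carrier Fs :: 'f set with
   distinguished elements z (the map 0), e (the map 1), m (the map -1),
   a composition mult, and an action act :: 'f => 'v => 'v on the group V
   (the whole type 'v, a group under +).  "Over the same F" = same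
   (Fs, z, e, m, mult), possibly different actions on V1 and V2. *)

definition F_group ::
  "'f set \<Rightarrow> 'f \<Rightarrow> 'f \<Rightarrow> 'f \<Rightarrow> ('f \<Rightarrow> 'f \<Rightarrow> 'f)
   \<Rightarrow> ('f \<Rightarrow> 'v::group_add \<Rightarrow> 'v) \<Rightarrow> bool" where
  "F_group Fs z e m mult act \<longleftrightarrow>
     z \<in> Fs \<and> e \<in> Fs \<and> m \<in> Fs
   \<and> inj_on act Fs
   \<and> (\<forall>a\<in>Fs. \<forall>x y. act a (x + y) = act a x + act a y)
   \<and> (\<forall>v. act z v = 0) \<and> (\<forall>v. act e v = v) \<and> (\<forall>v. act m v = - v)
   \<and> (\<forall>a\<in>Fs - {z}. bij (act a))
   \<and> (\<forall>a\<in>Fs - {z}. \<forall>b\<in>Fs - {z}. mult a b \<in> Fs - {z})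
   \<and> (\<forall>a\<in>Fs. \<forall>b\<in>Fs. \<forall>v. act (mult a b) v = act a (act b v))
   \<and> (\<forall>a\<in>Fs - {z}. \<exists>b\<in>Fs - {z}. mult b a = e)
   \<and> (\<forall>a\<in>Fs. \<forall>b\<in>Fs. \<forall>x. act a x = act b x \<longrightarrow> a = b \<or> x = 0)"

definition quasi_kernel :: "'f set \<Rightarrow> ('f \<Rightarrow> 'v::group_add \<Rightarrow> 'v) \<Rightarrow> 'v set" where
  "quasi_kernel Fs act =
     {u. \<forall>a\<in>Fs. \<forall>b\<in>Fs. \<exists>c\<in>Fs. act a u + act b u = act c u}"

definition gen_subgroup :: "'v::group_add set \<Rightarrow> 'v set" where
  "gen_subgroup S = \<Inter>{H. S \<subseteq> H \<and> 0 \<in> H \<and> (\<forall>x\<in>H. \<forall>y\<in>H. x + y \<in> H)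
                          \<and> (\<forall>x\<in>H. - x \<in> H)}"

definition near_vector_space ::
  "'f set \<Rightarrow> 'f \<Rightarrow> 'f \<Rightarrow> 'f \<Rightarrow> ('f \<Rightarrow> 'f \<Rightarrow> 'f)
   \<Rightarrow> ('f \<Rightarrow> 'v::group_add \<Rightarrow> 'v) \<Rightarrow> bool" where
  "near_vector_space Fs z e m mult act \<longleftrightarrow>
     F_group Fs z e m mult act \<and> gen_subgroup (quasi_kernel Fs act) = UNIV"

definition commutative_F :: "'f set \<Rightarrow> ('f \<Rightarrow> 'v \<Rightarrow> 'v) \<Rightarrow> bool" where
  "commutative_F Fs act \<longleftrightarrow> (\<forall>a\<in>Fs. \<forall>b\<in>Fs. \<forall>v. act a (act b v) = act b (act a v))"

definition plus_u :: "'f set \<Rightarrow> ('f \<Rightarrow> 'v::group_add \<Rightarrow> 'v) \<Rightarrow> 'v \<Rightarrow> 'f \<Rightarrow> 'f \<Rightarrow> 'f" where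
  "plus_u Fs act u = (\<lambda>a b. if a \<in> Fs \<and> b \<in> Fs
        then (THE c. c \<in> Fs \<and> act a u + act b u = act c u) else undefined)"

(* block type: {+_{u_i} : i in I}; since each nonzero quasi-kernel element lies in
   exactly one block and all of them in a block give the same +_u, this is
   the set of all +_u with u in Q(V) \ {0}. *)
definition block_type :: "'f set \<Rightarrow> ('f \<Rightarrow> 'v::group_add \<Rightarrow> 'v) \<Rightarrow> ('f \<Rightarrow> 'f \<Rightarrow> 'f) set" where
  "block_type Fs act = {plus_u Fs act u | u. u \<in> quasi_kernel Fs act - {0}}"

(* action of a formal sum a1 +. ... +. an on V *)
definition fsum_act :: "('f \<Rightarrow> 'v::group_add \<Rightarrow> 'v) \<Rightarrow> 'f list \<Rightarrow> 'v \<Rightarrow> 'v" where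
  "fsum_act act as v = sum_list (map (\<lambda>a. act a v) as)"

definition is_aut :: "('v::group_add \<Rightarrow> 'v) \<Rightarrow> bool" where
  "is_aut f \<longleftrightarrow> bij f \<and> (\<forall>x y. f (x + y) = f x + f y)"

definition Fbar_Aut :: "'f set \<Rightarrow> ('f \<Rightarrow> 'v::group_add \<Rightarrow> 'v) \<Rightarrow> 'f list set" where
  "Fbar_Aut Fs act = {as. as \<noteq> [] \<and> set as \<subseteq> Fs \<and> is_aut (fsum_act act as)}"

end

theory Submission
  imports Defs
begin

fun cval :: "'f \<Rightarrow> ('f \<Rightarrow> 'f \<Rightarrow> 'f) \<Rightarrow> 'f list \<Rightarrow> 'f" where
  "cval z p [] = z"
| "cval z p (a # as) = p a (cval z p as)"

locale nvs =
  fixes Fs :: "'f set" and z e m :: 'f and mult :: "'f \<Rightarrow> 'f \<Rightarrow> 'f"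
    and act :: "'f \<Rightarrow> 'v::group_add \<Rightarrow> 'v"
  assumes nvs: "near_vector_space Fs z e m mult act"
    and cF: "commutative_F Fs act"
begin

lemma fg: "F_group Fs z e m mult act" using nvs by (simp add: near_vector_space_def)
lemma gen: "gen_subgroup (quasi_kernel Fs act) = UNIV" using nvs by (simp add: near_vector_space_def)

lemma zF: "z \<in> Fs" and eF: "e \<in> Fs" and mF: "m \<in> Fs"
  and act_add: "a \<in> Fs \<Longrightarrow> act a (x + y) = act a x + act a y"
  and act_z: "act z v = 0" and act_e: "act e v = v" and act_m: "act m v = - v"
  and mult_inv: "a \<in> Fs - {z} \<Longrightarrow> \<exists>b\<in>Fs - {z}. mult b a = e"
  and act_mult: "a \<in> Fs \<Longrightarrow> b \<in> Fs \<Longrightarrow> act (mult a b) v = act a (act b v)"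
  and act_uniq: "a \<in> Fs \<Longrightarrow> b \<in> Fs \<Longrightarrow> act a x = act b x \<Longrightarrow> a = b \<or> x = 0"
  using fg unfolding F_group_def by blast+

lemma act_comm: "a \<in> Fs \<Longrightarrow> b \<in> Fs \<Longrightarrow> act a (act b v) = act b (act a v)"
  using cF unfolding commutative_F_def by blast

lemma vcomm: "(x::'v) + y = y + x"
proof -
  have "- (x + y) = - x + - y" for x y :: 'v
    using act_add[OF mF, of x y] by (simp add: act_m)
  hence "- (-y + -x) = - (-y) + - (-x)" by blast
  thus ?thesis by (simp add: minus_add)
qed

lemma vlcomm: "(x::'v) + (y + w) = y + (x + w)"
proof -
  have "x + (y + w) = (x + y) + w" by (simp only: add.assoc)
  also have "\<dots> = (y + x) + w" by (simp only: vcomm[of x y])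
  finally show ?thesis by (simp only: add.assoc)
qed

lemma swap4: "((a::'v) + b) + (c + d) = (a + c) + (b + d)"
  by (simp only: add.assoc vlcomm[of b c d])

lemma neg_add: "- ((a::'v) + b) = - a + - b"
  by (simp only: minus_add vcomm[of "-b" "-a"])

lemma act_0: assumes "a \<in> Fs" shows "act a 0 = 0"
proof -
  have "act a 0 + act a 0 = act a 0 + 0" using act_add[OF assms, of 0 0] by simp
  thus ?thesis by (rule add_left_cancel[THEN iffD1])
qed

lemma act_minus: "a \<in> Fs \<Longrightarrow> act a (- x) = - act a x"
proof -
  assume a: "a \<in> Fs"
  have "act a x + act a (-x) = 0" using act_add[OF a, of x "-x"] act_0[OF a] by simp
  from minus_unique[OF this] show ?thesis by simp
qed

lemma additive_sum:
  fixes h :: "'v \<Rightarrow> 'v"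
  assumes "\<And>x y. h (x + y) = h x + h y"
  shows "h (sum_list xs) = sum_list (map h xs)"
proof -
  have "h 0 + h 0 = h 0 + 0" using assms[of 0 0] by simp
  hence "h 0 = 0" by (rule add_left_cancel[THEN iffD1])
  thus ?thesis by (induction xs) (simp_all add: assms)
qed

abbreviation Q where "Q \<equiv> quasi_kernel Fs act"
abbreviation pu where "pu \<equiv> plus_u Fs act"

lemma pu_eq:
  assumes "u \<noteq> 0" "a \<in> Fs" "b \<in> Fs" "c \<in> Fs" "act a u + act b u = act c u"
  shows "pu u a b = c"
proof -
  have "(THE c. c \<in> Fs \<and> act a u + act b u = act c u) = c"
    apply (rule the_equality)
    using assms act_uniq by auto
  thus ?thesis using assms by (simp add: plus_u_def)
qed

lemma pu_spec:
  assumes "u \<in> Q" "u \<noteq> 0" "a \<in> Fs" "b \<in> Fs"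
  shows "pu u a b \<in> Fs \<and> act a u + act b u = act (pu u a b) u"
proof -
  obtain c where c: "c \<in> Fs" "act a u + act b u = act c u"
    using assms unfolding quasi_kernel_def by blast
  thus ?thesis using pu_eq[OF assms(2-4) c(1,2)] by simp
qed

lemma pu_ext:
  assumes "\<And>a b. a \<in> Fs \<Longrightarrow> b \<in> Fs \<Longrightarrow> pu u a b = pu w a b"
  shows "pu u = pu w"
  using assms by (auto simp: plus_u_def fun_eq_iff)

lemma Q_act: assumes "u \<in> Q" "l \<in> Fs" shows "act l u \<in> Q"
  unfolding quasi_kernel_def
proof (intro CollectI ballI)
  fix a b assume ab: "a \<in> Fs" "b \<in> Fs"
  then obtain c where c: "c \<in> Fs" "act a u + act b u = act c u"
    using assms unfolding quasi_kernel_def by blast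
  have "act a (act l u) + act b (act l u) = act l (act a u + act b u)"
    using ab assms by (simp add: act_add act_comm)
  also have "\<dots> = act c (act l u)" using c assms by (simp add: act_comm)
  finally show "\<exists>c\<in>Fs. act a (act l u) + act b (act l u) = act c (act l u)" using c by blast
qed

definition Qop where "Qop p = {u \<in> Q. u = 0 \<or> pu u = p}"

lemma Qop_0: "0 \<in> Qop p"
proof -
  have "0 \<in> Q" unfolding quasi_kernel_def using zF by (auto simp: act_0 act_z)
  thus ?thesis by (simp add: Qop_def)
qed

lemma Qop_act: assumes "u \<in> Qop p" "l \<in> Fs" shows "act l u \<in> Qop p"
proof (cases "act l u = 0")
  case True thus ?thesis using Qop_0 by simp
next
  case False
  hence u0: "u \<noteq> 0" using act_0 assms by auto
  have uQ: "u \<in> Q" "pu u = p" using assms u0 by (auto simp: Qop_def)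
  have "pu (act l u) a b = pu u a b" if ab: "a \<in> Fs" "b \<in> Fs" for a b
  proof (rule pu_eq[OF False ab])
    show "pu u a b \<in> Fs" using pu_spec[OF uQ(1) u0 ab] by blast
    have "act a (act l u) + act b (act l u) = act l (act a u + act b u)"
      using ab assms by (simp add: act_add act_comm)
    also have "\<dots> = act (pu u a b) (act l u)" using pu_spec[OF uQ(1) u0 ab] assms by (simp add: act_comm)
    finally show "act a (act l u) + act b (act l u) = act (pu u a b) (act l u)" .
  qed
  hence "pu (act l u) = pu u" by (rule pu_ext)
  hence "pu (act l u) = p" using uQ by simp
  thus ?thesis using Q_act[OF uQ(1) assms(2)] by (simp add: Qop_def)
qed

lemma Qop_add: assumes "u \<in> Qop p" "w \<in> Qop p" shows "u + w \<in> Qop p"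
proof (cases "u = 0 \<or> w = 0")
  case True thus ?thesis using assms by auto
next
  case False
  hence u0: "u \<noteq> 0" "w \<noteq> 0" by auto
  have uQ: "u \<in> Q" "pu u = p" "w \<in> Q" "pu w = p" using assms u0 by (auto simp: Qop_def)
  have key: "act a (u + w) + act b (u + w) = act (pu u a b) (u + w) \<and> pu u a b \<in> Fs"
    if ab: "a \<in> Fs" "b \<in> Fs" for a b
  proof -
    have "act a (u + w) + act b (u + w) = (act a u + act a w) + (act b u + act b w)"
      using ab by (simp add: act_add)
    also have "\<dots> = (act a u + act b u) + (act a w + act b w)" by (rule swap4)
    also have "\<dots> = act (pu u a b) u + act (pu u a b) w"
      using pu_spec[OF uQ(1) u0(1) ab] pu_spec[OF uQ(3) u0(2) ab] uQ by simp
    also have "\<dots> = act (pu u a b) (u + w)" using pu_spec[OF uQ(1) u0(1) ab] by (simp add: act_add)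
    finally show ?thesis using pu_spec[OF uQ(1) u0(1) ab] by simp
  qed
  have "u + w \<in> Q" unfolding quasi_kernel_def using key by blast
  moreover have "pu (u + w) = p" if "u + w \<noteq> 0"
  proof -
    have "pu (u + w) a b = pu u a b" if ab: "a \<in> Fs" "b \<in> Fs" for a b
      using pu_eq[OF \<open>u + w \<noteq> 0\<close> ab] key[OF ab] by blast
    hence "pu (u + w) = pu u" by (rule pu_ext)
    thus ?thesis using uQ by simp
  qed
  ultimately show ?thesis by (auto simp: Qop_def)
qed

lemma Qop_minus: "u \<in> Qop p \<Longrightarrow> - u \<in> Qop p"
  using Qop_act[OF _ mF] by (simp add: act_m)

lemma h_add:
  assumes "a \<in> Fs" "b \<in> Fs" "c \<in> Fs"
  shows "act a (x + y) + act b (x + y) - act c (x + y)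
       = (act a x + act b x - act c x) + (act a y + act b y - act c y)"
proof -
  have "act a (x + y) + act b (x + y) - act c (x + y)
      = ((act a x + act a y) + (act b x + act b y)) + - (act c x + act c y)"
    by (simp only: act_add[OF assms(1)] act_add[OF assms(2)] act_add[OF assms(3)] diff_conv_add_uminus)
  also have "\<dots> = ((act a x + act b x) + (act a y + act b y)) + (- act c x + - act c y)"
    by (simp only: swap4[of "act a x" "act a y"] neg_add[of "act c x"])
  also have "\<dots> = (act a x + act b x - act c x) + (act a y + act b y - act c y)"
    unfolding diff_conv_add_uminus by (rule swap4)
  finally show ?thesis .
qed

lemma Qop_h:
  assumes "a \<in> Fs" "b \<in> Fs" "c \<in> Fs" "u \<in> Qop p"
  shows "act a u + act b u - act c u \<in> Qop p"
  unfolding diff_conv_add_uminus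
  by (intro Qop_add Qop_minus Qop_act assms)

lemma sum_zeros: "(\<forall>p\<in>set ps. w p = (0::'v)) \<Longrightarrow> sum_list (map w ps) = 0"
  by (induction ps) auto

lemma direct:
  "distinct ps \<Longrightarrow> (\<forall>p\<in>set ps. w p \<in> Qop p) \<Longrightarrow> sum_list (map w ps) = 0
   \<Longrightarrow> \<forall>p\<in>set ps. w p = 0"
proof (induction ps arbitrary: w)
  case Nil
  then show ?case by simp
next
  case (Cons p0 ps)
  show ?case
  proof (cases "w p0 = 0")
    case True
    then have "sum_list (map w ps) = 0" using Cons.prems by simp
    then show ?thesis using Cons True by auto
  next
    case False
    have w0: "w p0 \<in> Q" "pu (w p0) = p0" using Cons.prems(2) False by (auto simp: Qop_def)
    have rest: "\<forall>p\<in>set ps. w p = 0"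
    proof (rule ccontr)
      assume "\<not> (\<forall>p\<in>set ps. w p = 0)"
      then obtain p where p: "p \<in> set ps" "w p \<noteq> 0" by blast
      have wp: "w p \<in> Q" "pu (w p) = p" using Cons.prems(2) p by (auto simp: Qop_def)
      have "pu (w p) a b = pu (w p0) a b" if ab: "a \<in> Fs" "b \<in> Fs" for a b
      proof -
        define c where "c = pu (w p0) a b"
        have c: "c \<in> Fs" "act a (w p0) + act b (w p0) = act c (w p0)"
          using pu_spec[OF w0(1) False ab] by (auto simp: c_def)
        define h where "h = (\<lambda>v. act a v + act b v - act c v)"
        have hadd: "h (x + y) = h x + h y" for x y
          unfolding h_def using h_add[OF ab c(1)] by blast
        have "h (sum_list (map w (p0 # ps))) = sum_list (map h (map w (p0 # ps)))"
          by (rule additive_sum[OF hadd])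
        moreover have "h 0 = 0" unfolding h_def using ab c by (simp add: act_0)
        moreover have "h (w p0) = 0" unfolding h_def using c by simp
        ultimately have "sum_list (map (\<lambda>q. h (w q)) ps) = 0"
          using Cons.prems(3) by (simp add: o_def)
        moreover have "\<forall>q\<in>set ps. h (w q) \<in> Qop q"
          unfolding h_def using Cons.prems(2) Qop_h[OF ab c(1)] by simp
        moreover have "distinct ps" using Cons.prems(1) by simp
        ultimately have "\<forall>q\<in>set ps. h (w q) = 0"
          using Cons.IH[of "\<lambda>q. h (w q)"] by blast
        hence "h (w p) = 0" using p by blast
        hence "act a (w p) + act b (w p) = act c (w p)" unfolding h_def
          by (simp add: diff_eq_eq)
        thus ?thesis using pu_eq[OF p(2) ab c(1)] c_def by simp
      qed
      hence "pu (w p) = pu (w p0)" by (rule pu_ext)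
      hence "p = p0" using wp w0 by simp
      thus False using p Cons.prems(1) by auto
    qed
    hence "sum_list (map w ps) = 0" by (rule sum_zeros)
    hence "w p0 = 0" using Cons.prems(3) by simp
    thus ?thesis using False by simp
  qed
qed

definition reps where
  "reps = {sum_list (map w ps) | ps w. distinct ps \<and> (\<forall>p\<in>set ps. w p \<in> Qop p)}"

lemma add_into:
  fixes w :: "'b \<Rightarrow> 'v"
  assumes "distinct ps" "p0 \<in> set ps"
  shows "sum_list (map (w(p0 := u + w p0)) ps) = u + sum_list (map w ps)"
  using assms
proof (induction ps)
  case Nil then show ?case by simp
next
  case (Cons q ps)
  show ?case
  proof (cases "q = p0")
    case True
    then have "map (w(p0 := u + w p0)) ps = map w ps" using Cons.prems by auto
    have "sum_list (map (w(p0 := u + w p0)) (q # ps)) = (u + w p0) + sum_list (map (w(p0 := u + w p0)) ps)"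
      by (simp only: list.map sum_list.Cons True fun_upd_same)
    also have "\<dots> = (u + w p0) + sum_list (map w ps)" by (simp only: \<open>map (w(p0 := u + w p0)) ps = map w ps\<close>)
    finally show ?thesis using True by (simp only: add.assoc list.map sum_list.Cons)
  next
    case False
    have "distinct ps" "p0 \<in> set ps" using Cons.prems False by auto
    then have IH: "sum_list (map (w(p0 := u + w p0)) ps) = u + sum_list (map w ps)"
      by (rule Cons.IH)
    have "sum_list (map (w(p0 := u + w p0)) (q # ps)) = w q + (u + sum_list (map w ps))"
      using False IH by simp
    also have "\<dots> = u + (w q + sum_list (map w ps))" by (rule vlcomm)
    finally show ?thesis by (simp only: list.map sum_list.Cons)
  qed
qed

lemma reps_addL:
  assumes "v \<in> reps" "u \<in> Q"
  shows "u + v \<in> reps"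
proof (cases "u = 0")
  case True then show ?thesis using assms by simp
next
  case False
  obtain ps w where v: "v = sum_list (map w ps)" "distinct ps" "\<forall>p\<in>set ps. w p \<in> Qop p"
    using assms(1) unfolding reps_def by blast
  define p0 where "p0 = pu u"
  have uQ: "u \<in> Qop p0" using assms(2) by (simp add: Qop_def p0_def)
  show ?thesis
  proof (cases "p0 \<in> set ps")
    case True
    have "u + v = sum_list (map (w(p0 := u + w p0)) ps)"
      using add_into[OF v(2) True, where w=w and u=u] v(1) by simp
    moreover have "\<forall>p\<in>set ps. (w(p0 := u + w p0)) p \<in> Qop p"
      using v(3) True uQ Qop_add by auto
    ultimately show ?thesis unfolding reps_def using v(2) by blast
  next
    case False
    have "map (w(p0 := u)) ps = map w ps" using False by auto
    hence "u + v = sum_list (map (w(p0 := u)) (p0 # ps))"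
      by (simp only: list.map sum_list.Cons fun_upd_same v(1))
    moreover have "\<forall>p\<in>set (p0 # ps). (w(p0 := u)) p \<in> Qop p"
      using v(3) uQ by auto
    moreover have "distinct (p0 # ps)" using v(2) False by simp
    ultimately show ?thesis unfolding reps_def by blast
  qed
qed

lemma list_reps: "set us \<subseteq> Q \<Longrightarrow> sum_list us \<in> reps"
proof (induction us)
  case Nil
  show ?case unfolding reps_def
    by (intro CollectI exI[of _ "[]"] exI[of _ "\<lambda>_. 0"]) simp
next
  case (Cons u us)
  then show ?case using reps_addL by simp
qed

lemma all_reps: "v \<in> reps"
proof -
  let ?L = "{sum_list us | us. set us \<subseteq> Q}"
  have Qm: "u \<in> Q \<Longrightarrow> - u \<in> Q" for u using Q_act[OF _ mF] by (simp add: act_m)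
  have "Q \<subseteq> ?L" proof
    fix u assume "u \<in> Q" thus "u \<in> ?L" by (intro CollectI exI[of _ "[u]"]) simp
  qed
  moreover have "0 \<in> ?L" by (intro CollectI exI[of _ "[]"]) simp
  moreover have "\<forall>x\<in>?L. \<forall>y\<in>?L. x + y \<in> ?L"
  proof (intro ballI)
    fix x y assume "x \<in> ?L" "y \<in> ?L"
    then obtain xs ys where "x = sum_list xs" "set xs \<subseteq> Q" "y = sum_list ys" "set ys \<subseteq> Q" by blast
    thus "x + y \<in> ?L" by (intro CollectI exI[of _ "xs @ ys"]) simp
  qed
  moreover have "\<forall>x\<in>?L. - x \<in> ?L"
  proof
    fix x assume "x \<in> ?L"
    then obtain xs where xs: "x = sum_list xs" "set xs \<subseteq> Q" by blast
    have "- sum_list xs = sum_list (map uminus xs)"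
      by (rule additive_sum) (simp add: neg_add)
    thus "- x \<in> ?L" using xs Qm by (intro CollectI exI[of _ "map uminus xs"]) auto
  qed
  ultimately have "gen_subgroup Q \<subseteq> ?L" unfolding gen_subgroup_def by (intro Inter_lower) blast
  hence "v \<in> ?L" using gen by auto
  thus ?thesis using list_reps by blast
qed

abbreviation fs where "fs as \<equiv> fsum_act act as"

lemma fsum_add: "set as \<subseteq> Fs \<Longrightarrow> fs as (x + y) = fs as x + fs as y"
proof (induction as)
  case Nil then show ?case by (simp add: fsum_act_def)
next
  case (Cons a as)
  then have "fs (a # as) (x + y) = (act a x + act a y) + (fs as x + fs as y)"
    by (simp add: fsum_act_def act_add)
  also have "\<dots> = (act a x + fs as x) + (act a y + fs as y)" by (rule swap4)
  also have "\<dots> = fs (a # as) x + fs (a # as) y" by (simp add: fsum_act_def)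
  finally show ?case .
qed

lemma fsum_comm: "set as \<subseteq> Fs \<Longrightarrow> l \<in> Fs \<Longrightarrow> fs as (act l v) = act l (fs as v)"
proof (induction as)
  case Nil then show ?case by (simp add: fsum_act_def act_0)
next
  case (Cons a as)
  then show ?case by (simp add: fsum_act_def act_add act_comm)
qed

lemma fsum_Q:
  assumes "u \<in> Q" "u \<noteq> 0"
  shows "set as \<subseteq> Fs \<Longrightarrow> cval z (pu u) as \<in> Fs \<and> fs as u = act (cval z (pu u) as) u"
proof (induction as)
  case Nil then show ?case by (simp add: fsum_act_def act_z zF)
next
  case (Cons a as)
  then have IH: "cval z (pu u) as \<in> Fs" "fs as u = act (cval z (pu u) as) u" "a \<in> Fs" by auto
  have "fs (a # as) u = act a u + fs as u" by (simp add: fsum_act_def)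
  also have "\<dots> = act (pu u a (cval z (pu u) as)) u"
    using IH pu_spec[OF assms IH(3) IH(1)] by simp
  finally show ?case using pu_spec[OF assms IH(3) IH(1)] by simp
qed

lemma charact:
  assumes "set as \<subseteq> Fs"
  shows "is_aut (fs as) \<longleftrightarrow> (\<forall>p\<in>block_type Fs act. cval z p as \<noteq> z)"
proof
  have f0: "fs as 0 = 0" using assms by (induction as) (auto simp: fsum_act_def act_0)
  {
    assume aut: "is_aut (fs as)"
    show "\<forall>p\<in>block_type Fs act. cval z p as \<noteq> z"
    proof
      fix p assume "p \<in> block_type Fs act"
      then obtain u where u: "p = pu u" "u \<in> Q" "u \<noteq> 0" unfolding block_type_def by blast
      show "cval z p as \<noteq> z"
      proof
        assume "cval z p as = z"
        hence "fs as u = fs as 0" using fsum_Q[OF u(2,3) assms] u(1) f0 by (simp add: act_z)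
        hence "u = 0" using aut unfolding is_aut_def bij_def inj_def by blast
        thus False using u by simp
      qed
    qed
  }
  assume nz: "\<forall>p\<in>block_type Fs act. cval z p as \<noteq> z"
  have cQ: "cval z (pu u) as \<in> Fs - {z} \<and> fs as u = act (cval z (pu u) as) u"
    if "u \<in> Q" "u \<noteq> 0" for u
    using fsum_Q[OF that assms] nz that unfolding block_type_def by blast
  have fneg: "fs as (- x) = - fs as x" for x
    using fsum_comm[OF assms mF] by (simp add: act_m)
  have surj: "surj (fs as)"
  proof -
    have "Q \<subseteq> range (fs as)"
    proof
      fix u assume uQ: "u \<in> Q"
      show "u \<in> range (fs as)"
      proof (cases "u = 0")
        case True then show ?thesis using f0 range_eqI[of u "fs as" 0] by simp
      next
        case False
        obtain c where c: "c \<in> Fs - {z}" "fs as u = act c u" using cQ[OF uQ False] by blast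
        obtain d where d: "d \<in> Fs - {z}" "mult d c = e" using mult_inv[OF c(1)] by blast
        have "fs as (act d u) = act d (act c u)" using fsum_comm[OF assms] d c by simp
        also have "\<dots> = u" using act_mult[of d c u] d c by (simp add: act_e)
        finally show ?thesis by (rule range_eqI[OF sym])
      qed
    qed
    moreover have "0 \<in> range (fs as)" using f0 range_eqI[of 0 "fs as" 0] by simp
    moreover have "\<forall>x\<in>range (fs as). \<forall>y\<in>range (fs as). x + y \<in> range (fs as)"
    proof clarify
      fix x y show "fs as x + fs as y \<in> range (fs as)"
        by (rule range_eqI[of _ _ "x + y"]) (simp add: fsum_add[OF assms])
    qed
    moreover have "\<forall>x\<in>range (fs as). - x \<in> range (fs as)"
    proof clarify
      fix x show "- fs as x \<in> range (fs as)"
        by (rule range_eqI[of _ _ "- x"]) (simp add: fneg)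
    qed
    ultimately have "gen_subgroup Q \<subseteq> range (fs as)" unfolding gen_subgroup_def
      by (intro Inter_lower) blast
    thus ?thesis using gen by auto
  qed
  have ker: "v = 0" if fv: "fs as v = 0" for v
  proof -
    obtain ps w where v: "v = sum_list (map w ps)" "distinct ps" "\<forall>p\<in>set ps. w p \<in> Qop p"
      using all_reps[of v] unfolding reps_def by blast
    have "fs as v = sum_list (map (fs as) (map w ps))"
      unfolding v(1) by (rule additive_sum) (rule fsum_add[OF assms])
    hence s0: "sum_list (map (\<lambda>p. fs as (w p)) ps) = 0" using fv by (simp add: o_def)
    have fwQ: "fs as (w p) \<in> Qop p" if "p \<in> set ps" for p
    proof (cases "w p = 0")
      case True then show ?thesis using f0 Qop_0 by simp
    next
      case False
      have "w p \<in> Q" using v(3) that by (simp add: Qop_def)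
      then show ?thesis using cQ[OF _ False] Qop_act v(3) that by auto
    qed
    have "\<forall>p\<in>set ps. fs as (w p) = 0" using direct[OF v(2) _ s0] fwQ by blast
    have "\<forall>p\<in>set ps. w p = 0"
    proof
      fix p assume p: "p \<in> set ps"
      show "w p = 0"
      proof (rule ccontr)
        assume wp: "w p \<noteq> 0"
        have "w p \<in> Q" using v(3) p by (simp add: Qop_def)
        then obtain c where c: "c \<in> Fs - {z}" "fs as (w p) = act c (w p)" using cQ wp by blast
        have "act c (w p) = act z (w p)"
          using c \<open>\<forall>p\<in>set ps. fs as (w p) = 0\<close> p by (simp add: act_z)
        thus False using act_uniq[of c z "w p"] c zF wp by blast
      qed
    qed
    thus "v = 0" using v(1) sum_zeros by simp
  qed
  have inj: "inj (fs as)"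
  proof (rule injI)
    fix x y assume eq: "fs as x = fs as y"
    have "fs as (x + - y) = fs as x + - fs as y" by (simp only: fsum_add[OF assms] fneg)
    hence "fs as (x + - y) = 0" using eq by simp
    hence "x + - y = 0" by (rule ker)
    from minus_unique[OF this] show "x = y" by simp
  qed
  show "is_aut (fs as)" unfolding is_aut_def bij_def
    using inj surj fsum_add[OF assms] by blast
qed

end

theorem mainTheorem8:
  fixes Fs :: "'f set" and z e m :: 'f and mult :: "'f \<Rightarrow> 'f \<Rightarrow> 'f"
    and act1 :: "'f \<Rightarrow> 'a::group_add \<Rightarrow> 'a"
    and act2 :: "'f \<Rightarrow> 'b::group_add \<Rightarrow> 'b"
  assumes "near_vector_space Fs z e m mult act1"
    and "near_vector_space Fs z e m mult act2"
    and "commutative_F Fs act1"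
    and "commutative_F Fs act2"
    and "block_type Fs act1 = block_type Fs act2"
  shows "Fbar_Aut Fs act1 = Fbar_Aut Fs act2"
proof -
  interpret A: nvs Fs z e m mult act1 using assms by (simp add: nvs_def)
  interpret B: nvs Fs z e m mult act2 using assms by (simp add: nvs_def)
  show ?thesis unfolding Fbar_Aut_def using A.charact B.charact assms(5) by auto
qed

end
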